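(* Suppose Assumption 1 holds. Let $\mathbf{x}^*\in\mathcal{X}_0$ satisfy $\mathbf{g}(\mathbf{x}^* )\le\mathbf{0}$ (componentwise). Let $\gamma>0$ and $\eta>0$ be arbitrary and suppose $\alpha\ge\frac12(\gamma^2\beta^2+\eta)$ in Algorithm 1. Then for all $t\ge1$, $$\Delta(t+1)+f^t(\mathbf{x}(t))\le f^t(\mathbf{x}^* )+\alpha\big[\|\mathbf{x}^*-\mathbf{x}(t)\|^2-\|\mathbf{x}^*-\mathbf{x}(t+1)\|^2\big]+\tfrac12\big[\|\tilde{\mathbf{g}}(\mathbf{x}(t+1))\|^2-\|\tilde{\mathbf{g}}(\mathbf{x}(t))\|^2\big]+\frac{D^2}{2\eta}.$$
   Context: Setting: $n,m$ positive integers; $\mathcal{X}_0\subset\mathbb{R}^n$ is a nonempty compact convex set; $\mathbf{g}=(g_1,\ldots,g_m)^{\mathsf T}:\mathbb{R}^n\to\mathbb{R}^m$ with each $g_k$ convex and continuous; $f^t$, $t=0,1,2,\ldots$, are convex differentiable real functions on (a neighborhood of) $\mathcal{X}_0$. All norms are Euclidean. Assumption 1: there are constants $D,\beta,G,R>0$ with $\|\nabla f^t(\mathbf{x})\|\le D$ for all $\mathbf{x}\in\mathcal{X}_0$ and all $t\ge0$; $\|\mathbf{g}(\mathbf{x})-\mathbf{g}(\mathbf{y})\|\le\beta\|\mathbf{x}-\mathbf{y}\|$ for all $\mathbf{x},\mathbf{y}\in\mathcal{X}_0$; $\|\mathbf{g}(\mathbf{x})\|\le G$ for all $\mathbf{x}\in\mathcal{X}_0$;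 $\|\mathbf{x}-\mathbf{y}\|\le R$ for all $\mathbf{x},\mathbf{y}\in\mathcal{X}_0$. Algorithm 1 (parameters $\gamma>0,\alpha>0$): let $\tilde{\mathbf{g}}(\mathbf{x})=\gamma\mathbf{g}(\mathbf{x})$. Choose any $\mathbf{x}(0)\in\mathcal{X}_0$ and set $Q_k(0)=0$ for all $k$. For each $t=0,1,2,\ldots$: set $Q_k(t+1)=\max\{-\tilde g_k(\mathbf{x}(t)),\,Q_k(t)+\tilde g_k(\mathbf{x}(t))\}$ for $k=1,\ldots,m$, and let $\mathbf{x}(t+1)$ be a minimizer over $\mathbf{x}\in\mathcal{X}_0$ of $[\nabla f^t(\mathbf{x}(t))]^{\mathsf T}(\mathbf{x}-\mathbf{x}(t))+[\mathbf{Q}(t+1)+\tilde{\mathbf{g}}(\mathbf{x}(t))]^{\mathsf T}\tilde{\mathbf{g}}(\mathbf{x})+\alpha\|\mathbf{x}-\mathbf{x}(t)\|^2$, where $\mathbf{Q}(t)=(Q_1(t),\ldots,Q_m(t))^{\mathsf T}$. Lyapunov function and drift: $L(t)=\tfrac12\|\mathbf{Q}(t)\|^2$ and $\Delta(t)=L(t+1)-L(t)$. *)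

theory Defs
  imports "HOL-Analysis.Analysis"
begin

text \<open>Algorithm 1. Vectors in R^n are real^'n, constraint vectors in R^m are real^'m.
  grad t x is the gradient of f^t at x. The run (x, Q) of the algorithm is any pair of
  sequences satisfying the update rules; x(t+1) is any minimizer of the per-slot objective.\<close>

definition alg1_obj ::
  "real \<Rightarrow> real \<Rightarrow> (real^'n \<Rightarrow> real^'m) \<Rightarrow> real^'n \<Rightarrow> real^'n \<Rightarrow> real^'m \<Rightarrow> real^'n \<Rightarrow> real"
  where "alg1_obj \<gamma> \<alpha> g gr xt Qnext y =
     gr \<bullet> (y - xt) + (Qnext + \<gamma> *\<^sub>R g xt) \<bullet> (\<gamma> *\<^sub>R g y) + \<alpha> * (norm (y - xt))\<^sup>2"

definition alg1_run ::
  "real \<Rightarrow> real \<Rightarrow> (real^'n) set \<Rightarrow> (real^'n \<Rightarrow> real^'m) \<Rightarrow> (nat \<Rightarrow> real^'n \<Rightarrow> real^'n)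
   \<Rightarrow> (nat \<Rightarrow> real^'n) \<Rightarrow> (nat \<Rightarrow> real^'m) \<Rightarrow> bool"
  where "alg1_run \<gamma> \<alpha> X0 g grad x Q \<longleftrightarrow>
     x 0 \<in> X0 \<and> Q 0 = 0 \<and>
     (\<forall>t. Q (Suc t) = (\<chi> k. max (- (\<gamma> * g (x t) $ k)) (Q t $ k + \<gamma> * g (x t) $ k))) \<and>
     (\<forall>t. x (Suc t) \<in> X0 \<and>
        (\<forall>y\<in>X0. alg1_obj \<gamma> \<alpha> g (grad t (x t)) (x t) (Q (Suc t)) (x (Suc t))
                  \<le> alg1_obj \<gamma> \<alpha> g (grad t (x t)) (x t) (Q (Suc t)) y))"

definition lyap :: "(nat \<Rightarrow> real^'m) \<Rightarrow> nat \<Rightarrow> real"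
  where "lyap Q t = (norm (Q t))\<^sup>2 / 2"

definition drift :: "(nat \<Rightarrow> real^'m) \<Rightarrow> nat \<Rightarrow> real"
  where "drift Q t = lyap Q (Suc t) - lyap Q t"

end

theory Submission
  imports Defs
begin

lemma grad_ineq:
  fixes f :: "'a::real_inner \<Rightarrow> real"
  assumes cv: "convex_on U f" and U: "convex U" and c: "c \<in> U" and x: "x \<in> U"
    and d: "(f has_derivative (\<lambda>h. gr \<bullet> h)) (at c)"
  shows "f c + gr \<bullet> (x - c) \<le> f x"
proof -
  define v where "v = x - c"
  have l: "((\<lambda>s. c + s *\<^sub>R v) has_derivative (\<lambda>h. h *\<^sub>R v)) (at (0::real))"
    by (auto intro!: derivative_eq_intros)
  have "((\<lambda>s. f (c + s *\<^sub>R v)) has_derivative (\<lambda>h. gr \<bullet> (h *\<^sub>R v))) (at (0::real))"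
  proof -
    have d': "(f has_derivative (\<lambda>h. gr \<bullet> h)) (at (c + (0::real) *\<^sub>R v))" using d by simp
    show ?thesis using has_derivative_compose[OF l d'] .
  qed
  hence "((\<lambda>s. f (c + s *\<^sub>R v)) has_field_derivative (gr \<bullet> v)) (at (0::real))"
    unfolding has_field_derivative_def by (simp add: mult.commute[of _ "gr \<bullet> v"])
  hence "((\<lambda>y. (f (c + y *\<^sub>R v) - f c) / y) \<longlongrightarrow> gr \<bullet> v) (at (0::real))"
    by (simp add: has_field_derivative_iff)
  hence lim: "((\<lambda>y. (f (c + y *\<^sub>R v) - f c) / y) \<longlongrightarrow> gr \<bullet> v) (at_right (0::real))"
    by (auto intro: tendsto_mono at_le)
  have ev: "eventually (\<lambda>y. (f (c + y *\<^sub>R v) - f c) / y \<le> f x - f c) (at_right (0::real))"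
    using eventually_at_right_real[of 0 1, OF zero_less_one]
  proof eventually_elim
    case (elim y)
    have "c + y *\<^sub>R v = (1 - y) *\<^sub>R c + y *\<^sub>R x" by (simp add: v_def algebra_simps)
    hence "f (c + y *\<^sub>R v) \<le> (1 - y) * f c + y * f x"
      using convex_onD[OF cv, of y c x] elim c x by simp
    hence h: "f (c + y *\<^sub>R v) - f c \<le> (f x - f c) * y" by (simp add: algebra_simps)
    show ?case using elim h by (subst pos_divide_le_eq) auto
  qed
  have "gr \<bullet> v \<le> f x - f c"
    by (rule tendsto_upperbound[OF lim ev]) simp
  thus ?thesis by (simp add: v_def)
qed

lemma norm_comb:
  fixes a b :: "'a::real_inner"
  shows "(norm ((1 - l) *\<^sub>R a + l *\<^sub>R b))\<^sup>2 = (1 - l) * (norm a)\<^sup>2 + l * (norm b)\<^sup>2 - l * (1 - l) * (norm (a - b))\<^sup>2"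
  unfolding power2_norm_eq_inner by (simp add: inner_diff inner_add inner_commute algebra_simps)

lemma min_real:
  fixes p0 p1 \<alpha> N :: real
  assumes "\<alpha> \<ge> 0" "N \<ge> 0"
    and h: "\<And>l. 0 < l \<Longrightarrow> l \<le> 1 \<Longrightarrow> p0 \<le> (1 - l) * p0 + l * p1 - \<alpha> * l * (1 - l) * N"
  shows "p0 \<le> p1 - \<alpha> * N"
proof -
  have h2: "p0 \<le> p1 - \<alpha> * (1 - l) * N" if "0 < l" "l \<le> 1" for l
  proof -
    have "l * p0 \<le> l * (p1 - \<alpha> * (1 - l) * N)" using h[OF that] by (simp add: algebra_simps)
    thus ?thesis using that by simp
  qed
  show ?thesis
  proof (rule ccontr)
    assume c: "\<not> ?thesis"
    have "p0 \<le> p1" using h2[of 1] by simp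
    with c have aN: "\<alpha> * N > 0" by linarith
    define \<delta> where "\<delta> = p0 - p1 + \<alpha> * N"
    have dpos: "\<delta> > 0" using c \<delta>_def by linarith
    define l where "l = min 1 (\<delta> / (2 * (\<alpha> * N)))"
    have l0: "l > 0" using dpos aN l_def by simp
    have l1: "l \<le> 1" using l_def by simp
    have "l \<le> \<delta> / (2 * (\<alpha> * N))" by (simp add: l_def)
    hence "(\<alpha> * N) * l \<le> (\<alpha> * N) * (\<delta> / (2 * (\<alpha> * N)))"
      using aN by (intro mult_left_mono) auto
    hence "\<alpha> * l * N \<le> \<alpha> * N * (\<delta> / (2 * (\<alpha> * N)))"
      by (simp add: mult.commute mult.left_commute)
    also have "\<dots> = \<delta> / 2" using aN by (cases "\<alpha> = 0"; cases "N = 0") (auto simp: field_simps)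
    finally have "\<alpha> * l * N \<le> \<delta> / 2" .
    moreover have "p0 \<le> p1 - \<alpha> * N + \<alpha> * l * N" using h2[OF l0 l1] by (simp add: algebra_simps)
    ultimately show False using dpos \<delta>_def by linarith
  qed
qed

theorem lemma8:
  fixes X0 :: "(real^'n) set"
    and g :: "real^'n \<Rightarrow> real^'m"
    and f :: "nat \<Rightarrow> real^'n \<Rightarrow> real"
    and grad :: "nat \<Rightarrow> real^'n \<Rightarrow> real^'n"
    and x :: "nat \<Rightarrow> real^'n"
    and Q :: "nat \<Rightarrow> real^'m"
    and xs :: "real^'n"
    and D \<beta> G R \<gamma> \<eta> \<alpha> :: real
  assumes X0: "X0 \<noteq> {}" "compact X0" "convex X0"
    and g_convex: "\<And>k. convex_on UNIV (\<lambda>y. g y $ k)"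
    and g_cont: "continuous_on UNIV g"
    and f_diff: "\<And>t. \<exists>U. open U \<and> convex U \<and> X0 \<subseteq> U \<and> convex_on U (f t) \<and>
                   (\<forall>y\<in>U. (f t has_derivative (\<lambda>h. grad t y \<bullet> h)) (at y))"
    and consts_pos: "D > 0" "\<beta> > 0" "G > 0" "R > 0"
    and grad_bd: "\<And>t y. y \<in> X0 \<Longrightarrow> norm (grad t y) \<le> D"
    and g_lip: "\<And>y z. y \<in> X0 \<Longrightarrow> z \<in> X0 \<Longrightarrow> norm (g y - g z) \<le> \<beta> * norm (y - z)"
    and g_bd: "\<And>y. y \<in> X0 \<Longrightarrow> norm (g y) \<le> G"
    and diam: "\<And>y z. y \<in> X0 \<Longrightarrow> z \<in> X0 \<Longrightarrow> norm (y - z) \<le> R"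
    and xs: "xs \<in> X0" "\<And>k. g xs $ k \<le> 0"
    and params: "\<gamma> > 0" "\<eta> > 0" "\<alpha> \<ge> (\<gamma>\<^sup>2 * \<beta>\<^sup>2 + \<eta>) / 2"
    and run: "alg1_run \<gamma> \<alpha> X0 g grad x Q"
    and t: "t \<ge> 1"
  shows "drift Q (t + 1) + f t (x t)
         \<le> f t xs + \<alpha> * ((norm (xs - x t))\<^sup>2 - (norm (xs - x (t + 1)))\<^sup>2)
           + ((norm (\<gamma> *\<^sub>R g (x (t + 1))))\<^sup>2 - (norm (\<gamma> *\<^sub>R g (x t)))\<^sup>2) / 2
           + D\<^sup>2 / (2 * \<eta>)"
proof -
  have Qs: "\<And>s. Q (Suc s) = (\<chi> k. max (- (\<gamma> * g (x s) $ k)) (Q s $ k + \<gamma> * g (x s) $ k))"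
    using run unfolding alg1_run_def by blast
  have xin: "\<And>s. x s \<in> X0"
  proof -
    fix s show "x s \<in> X0" using run unfolding alg1_run_def by (cases s) auto
  qed
  have minr: "\<And>y. y \<in> X0 \<Longrightarrow> alg1_obj \<gamma> \<alpha> g (grad t (x t)) (x t) (Q (Suc t)) (x (Suc t))
                  \<le> alg1_obj \<gamma> \<alpha> g (grad t (x t)) (x t) (Q (Suc t)) y"
    using run unfolding alg1_run_def by blast
  obtain U where U: "open U" "convex U" "X0 \<subseteq> U" "convex_on U (f t)"
     "\<forall>y\<in>U. (f t has_derivative (\<lambda>h. grad t y \<bullet> h)) (at y)"
    using f_diff[of t] by blast
  define xt where "xt = x t"
  define x1 where "x1 = x (Suc t)"
  define q where "q = Q (Suc t)"
  define d where "d = grad t xt"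
  define G0 where "G0 = \<gamma> *\<^sub>R g xt"
  define G1 where "G1 = \<gamma> *\<^sub>R g x1"
  define c where "c = q + G0"
  define H where "H = (\<lambda>y. c \<bullet> (\<gamma> *\<^sub>R g y))"
  define \<phi> where "\<phi> = (\<lambda>y. d \<bullet> (y - xt) + H y + \<alpha> * (norm (y - xt))\<^sup>2)"
  have xtX: "xt \<in> X0" and x1X: "x1 \<in> X0" using xin by (auto simp: xt_def x1_def)
  have \<alpha>0: "\<alpha> \<ge> 0" using params
    by (smt (verit, best) divide_nonneg_pos mult_nonneg_nonneg zero_le_power2)
  have cnn: "\<And>k. c $ k \<ge> 0"
    by (simp add: c_def q_def G0_def Qs xt_def)
  have Hconv: "H ((1 - l) *\<^sub>R a + l *\<^sub>R b) \<le> (1 - l) * H a + l * H b"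
    if "0 \<le> l" "l \<le> 1" for l a b
  proof -
    have "H ((1 - l) *\<^sub>R a + l *\<^sub>R b) = (\<Sum>k\<in>UNIV. c $ k * (\<gamma> * g ((1 - l) *\<^sub>R a + l *\<^sub>R b) $ k))"
      by (simp add: H_def inner_vec_def)
    also have "\<dots> \<le> (\<Sum>k\<in>UNIV. (1 - l) * (c $ k * (\<gamma> * g a $ k)) + l * (c $ k * (\<gamma> * g b $ k)))"
    proof (rule sum_mono)
      fix k
      have "g ((1 - l) *\<^sub>R a + l *\<^sub>R b) $ k \<le> (1 - l) * g a $ k + l * g b $ k"
        using convex_onD[OF g_convex[of k], of l a b] that by simp
      hence "(c $ k * \<gamma>) * g ((1 - l) *\<^sub>R a + l *\<^sub>R b) $ k \<le> (c $ k * \<gamma>) * ((1 - l) * g a $ k + l * g b $ k)"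
        using cnn[of k] params(1) by (intro mult_left_mono) auto
      thus "c $ k * (\<gamma> * g ((1 - l) *\<^sub>R a + l *\<^sub>R b) $ k) \<le> (1 - l) * (c $ k * (\<gamma> * g a $ k)) + l * (c $ k * (\<gamma> * g b $ k))"
        by (simp add: algebra_simps)
    qed
    also have "\<dots> = (1 - l) * H a + l * H b"
      by (simp add: H_def inner_vec_def sum.distrib sum_distrib_left)
    finally show ?thesis .
  qed
  have Hxs: "H xs \<le> 0"
    unfolding H_def inner_vec_def
    using cnn xs(2) params(1)
    by (auto intro!: sum_nonpos mult_nonneg_nonpos)
  have phimin: "\<phi> x1 \<le> \<phi> xs - \<alpha> * (norm (xs - x1))\<^sup>2"
  proof (rule min_real[OF \<alpha>0 zero_le_power2])
    fix l :: real assume l: "0 < l" "l \<le> 1"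
    define z where "z = (1 - l) *\<^sub>R x1 + l *\<^sub>R xs"
    have zX: "z \<in> X0" using convexD[OF X0(3) x1X xs(1), of "1 - l" l] l by (simp add: z_def)
    have "\<phi> x1 \<le> \<phi> z" using minr[OF zX]
      by (simp add: alg1_obj_def \<phi>_def H_def xt_def x1_def d_def c_def q_def G0_def)
    have zx: "z - xt = (1 - l) *\<^sub>R (x1 - xt) + l *\<^sub>R (xs - xt)"
      by (simp add: z_def algebra_simps)
    have e1: "d \<bullet> (z - xt) = (1 - l) * (d \<bullet> (x1 - xt)) + l * (d \<bullet> (xs - xt))"
      unfolding zx by (simp add: inner_simps)
    have e2: "H z \<le> (1 - l) * H x1 + l * H xs" unfolding z_def using Hconv l by simp
    have "(norm (z - xt))\<^sup>2 = (1 - l) * (norm (x1 - xt))\<^sup>2 + l * (norm (xs - xt))\<^sup>2 - l * (1 - l) * (norm (xs - x1))\<^sup>2"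
      unfolding zx norm_comb by (simp add: norm_minus_commute)
    hence e3': "\<alpha> * (norm (z - xt))\<^sup>2 = \<alpha> * ((1 - l) * (norm (x1 - xt))\<^sup>2 + l * (norm (xs - xt))\<^sup>2 - l * (1 - l) * (norm (xs - x1))\<^sup>2)"
      by simp
    have e3: "\<alpha> * (norm (z - xt))\<^sup>2 = (1 - l) * (\<alpha> * (norm (x1 - xt))\<^sup>2) + l * (\<alpha> * (norm (xs - xt))\<^sup>2) - \<alpha> * l * (1 - l) * (norm (xs - x1))\<^sup>2"
      unfolding e3' by (simp add: algebra_simps)
    have e4: "(1 - l) * \<phi> x1 + l * \<phi> xs - \<alpha> * l * (1 - l) * (norm (xs - x1))\<^sup>2
       = ((1 - l) * (d \<bullet> (x1 - xt)) + l * (d \<bullet> (xs - xt))) + ((1 - l) * H x1 + l * H xs)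
         + ((1 - l) * (\<alpha> * (norm (x1 - xt))\<^sup>2) + l * (\<alpha> * (norm (xs - xt))\<^sup>2) - \<alpha> * l * (1 - l) * (norm (xs - x1))\<^sup>2)"
      by (simp add: \<phi>_def algebra_simps)
    have "\<phi> z = d \<bullet> (z - xt) + H z + \<alpha> * (norm (z - xt))\<^sup>2" by (simp add: \<phi>_def)
    show "\<phi> x1 \<le> (1 - l) * \<phi> x1 + l * \<phi> xs - \<alpha> * l * (1 - l) * (norm (xs - x1))\<^sup>2"
      using \<open>\<phi> x1 \<le> \<phi> z\<close> \<open>\<phi> z = _\<close> e1 e2 e3 e4 by linarith
  qed
  have Q2: "(norm (Q (Suc (Suc t))))\<^sup>2 \<le> (norm (q + G1))\<^sup>2 + (norm G1)\<^sup>2"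
  proof -
    have "(norm (Q (Suc (Suc t))))\<^sup>2 = (\<Sum>k\<in>UNIV. max (- G1 $ k) (q $ k + G1 $ k) * max (- G1 $ k) (q $ k + G1 $ k))"
      unfolding power2_norm_eq_inner by (simp add: inner_vec_def Qs G1_def x1_def q_def)
    also have "\<dots> \<le> (\<Sum>k\<in>UNIV. (q $ k + G1 $ k) * (q $ k + G1 $ k) + G1 $ k * G1 $ k)"
    proof (rule sum_mono)
      fix k
      show "max (- G1 $ k) (q $ k + G1 $ k) * max (- G1 $ k) (q $ k + G1 $ k) \<le> (q $ k + G1 $ k) * (q $ k + G1 $ k) + G1 $ k * G1 $ k"
        by (cases "- G1 $ k \<le> q $ k + G1 $ k") (auto simp: max_def)
    qed
    also have "\<dots> = (norm (q + G1))\<^sup>2 + (norm G1)\<^sup>2"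
      unfolding power2_norm_eq_inner by (simp add: inner_vec_def sum.distrib)
    finally show ?thesis .
  qed
  have dr: "drift Q (t + 1) = ((norm (Q (Suc (Suc t))))\<^sup>2 - (norm q)\<^sup>2) / 2"
    by (simp add: drift_def lyap_def q_def)
  have ident: "((norm (q + G1))\<^sup>2 + (norm G1)\<^sup>2 - (norm q)\<^sup>2) / 2
      = H x1 + ((norm G1)\<^sup>2 - (norm G0)\<^sup>2) / 2 + (norm (G1 - G0))\<^sup>2 / 2"
    unfolding power2_norm_eq_inner H_def c_def
    by (simp add: G1_def[symmetric] inner_simps inner_commute algebra_simps) (simp add: field_simps)
  have "norm (G1 - G0) = \<gamma> * norm (g x1 - g xt)"
    using params(1) by (simp add: G1_def G0_def flip: scaleR_diff_right)
  also have "\<dots> \<le> \<gamma> * (\<beta> * norm (x1 - xt))"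
    using g_lip[OF x1X xtX] params(1) by (intro mult_left_mono) auto
  finally have "(norm (G1 - G0))\<^sup>2 \<le> (\<gamma> * (\<beta> * norm (x1 - xt)))\<^sup>2"
    by (intro power_mono) auto
  hence lip: "(norm (G1 - G0))\<^sup>2 \<le> \<gamma>\<^sup>2 * \<beta>\<^sup>2 * (norm (x1 - xt))\<^sup>2"
    by (simp add: power_mult_distrib mult.assoc)
  have gi: "f t xt + d \<bullet> (xs - xt) \<le> f t xs"
    unfolding d_def
    by (rule grad_ineq[OF U(4) U(2)]) (use U xtX xs(1) in auto)
  define r where "r = norm (x1 - xt)"
  have "- (d \<bullet> (x1 - xt)) \<le> norm d * r"
    unfolding r_def by (metis Cauchy_Schwarz_ineq2 abs_le_iff norm_minus_commute minus_diff_eq inner_minus_right abs_minus_cancel)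
  also have "\<dots> \<le> D * r" using grad_bd[OF xtX] by (simp add: d_def r_def mult_right_mono)
  also have "\<dots> \<le> D\<^sup>2 / (2 * \<eta>) + \<eta> * r\<^sup>2 / 2"
  proof -
    have "0 \<le> (D - \<eta> * r)\<^sup>2" by simp
    hence "2 * \<eta> * (D * r) \<le> D\<^sup>2 + \<eta>\<^sup>2 * r\<^sup>2" by (simp add: power2_eq_square algebra_simps)
    thus ?thesis using params(2) by (simp add: field_simps power2_eq_square)
  qed
  finally have cs: "- (d \<bullet> (x1 - xt)) \<le> D\<^sup>2 / (2 * \<eta>) + \<eta> * r\<^sup>2 / 2" .
  have coef: "\<gamma>\<^sup>2 * \<beta>\<^sup>2 * r\<^sup>2 / 2 + \<eta> * r\<^sup>2 / 2 \<le> \<alpha> * r\<^sup>2"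
  proof -
    have "((\<gamma>\<^sup>2 * \<beta>\<^sup>2 + \<eta>) / 2) * r\<^sup>2 \<le> \<alpha> * r\<^sup>2"
      using params(3) by (intro mult_right_mono) auto
    thus ?thesis by (simp add: algebra_simps)
  qed
  have phix1: "\<phi> x1 = d \<bullet> (x1 - xt) + H x1 + \<alpha> * r\<^sup>2" by (simp add: \<phi>_def r_def)
  have phixs: "\<phi> xs = d \<bullet> (xs - xt) + H xs + \<alpha> * (norm (xs - xt))\<^sup>2" by (simp add: \<phi>_def)
  have goaleq: "\<alpha> * ((norm (xs - xt))\<^sup>2 - (norm (xs - x1))\<^sup>2) = \<alpha> * (norm (xs - xt))\<^sup>2 - \<alpha> * (norm (xs - x1))\<^sup>2"
    by (simp add: algebra_simps)
  have "drift Q (t + 1) + f t xt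
         \<le> f t xs + \<alpha> * ((norm (xs - xt))\<^sup>2 - (norm (xs - x1))\<^sup>2)
           + ((norm G1)\<^sup>2 - (norm G0)\<^sup>2) / 2 + D\<^sup>2 / (2 * \<eta>)"
    using dr Q2 ident lip[folded r_def] gi cs coef phix1 phixs phimin Hxs goaleq by argo
  thus ?thesis by (simp add: xt_def x1_def G0_def G1_def)
qed

end
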